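(* Fix $\theta\in(0,1)$. For positive integers $m,n$, let $\bm{D}_0\in\mathbb{R}^{m\times m}$ have i.i.d. $\mathcal{N}(0,1/m)$ entries, let $\bm{X}_0\in\mathbb{R}^{m\times n}$ have i.i.d. $BG(\theta)$ entries, and let $\Omega$ be the support of $\bm{X}_0$ and $\Omega_i\subseteq[n]$ the support of its $i$-th row, $\Omega_i^c=[n]\setminus\Omega_i$. Consider the conditions: (C1) $n\ge m+\frac{|\Omega|}{m}-1$; (C2) for all $i\in[m]$, $|\Omega_i^c|\ge m-1$; (C3) for all $i\in[m]$ and all $i'\ne i$ in $[m]$, there exists $j\in[n]$ with $(\bm{X}_0)_{i,j}=0$ and $(\bm{X}_0)_{i',j}\ne0$. Let $m,n\to\infty$ with $n/m\to\bar{n}\in(0,\infty)$. If $\bar{n}>\frac{1}{1-\theta}$, then the probability that all three conditions (C1), (C2), (C3) hold tends to $1$.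
   Context: $[n]=\{1,\dots,n\}$. A random variable $X$ is Bernoulli–Gaussian, $X\sim BG(\theta)$, if $X=W\cdot C$ with $W$ and $C$ independent, $W$ Bernoulli with $\Pr(W=1)=\theta$, and $C\sim\mathcal{N}(0,1)$. The support of a matrix or row vector is the set of indices of its nonzero entries. *)

theory Defs
  imports "HOL-Probability.Probability"
begin

definition BG :: "real \<Rightarrow> real measure" where
  "BG \<theta> = distr (measure_pmf (bernoulli_pmf \<theta>) \<Otimes>\<^sub>M density lborel std_normal_density) borel
             (\<lambda>(w, c). (if w then 1 else 0) * c)"

text \<open>Random matrix with i.i.d. entries of law \<mu>, indexed by [m] x [n] (1-based).\<close>
definition iid_matrix :: "nat \<Rightarrow> nat \<Rightarrow> real measure \<Rightarrow> (nat \<times> nat \<Rightarrow> real) measure" where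
  "iid_matrix m n \<mu> = PiM ({1..m} \<times> {1..n}) (\<lambda>_. \<mu>)"

text \<open>Joint law of (D0, X0): D0 in R^{m x m} with i.i.d. N(0,1/m) entries
  (standard deviation 1/sqrt m), X0 in R^{m x n} with i.i.d. BG(theta) entries, independent.\<close>
definition model :: "real \<Rightarrow> nat \<Rightarrow> nat \<Rightarrow> ((nat \<times> nat \<Rightarrow> real) \<times> (nat \<times> nat \<Rightarrow> real)) measure" where
  "model \<theta> m n = iid_matrix m m (density lborel (normal_density 0 (1 / sqrt (real m))))
                   \<Otimes>\<^sub>M iid_matrix m n (BG \<theta>)"

definition supp :: "nat \<Rightarrow> nat \<Rightarrow> (nat \<times> nat \<Rightarrow> real) \<Rightarrow> (nat \<times> nat) set" where
  "supp m n X = {(i, j) \<in> {1..m} \<times> {1..n}. X (i, j) \<noteq> 0}"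

definition row_supp :: "nat \<Rightarrow> (nat \<times> nat \<Rightarrow> real) \<Rightarrow> nat \<Rightarrow> nat set" where
  "row_supp n X i = {j \<in> {1..n}. X (i, j) \<noteq> 0}"

definition C1 :: "nat \<Rightarrow> nat \<Rightarrow> (nat \<times> nat \<Rightarrow> real) \<Rightarrow> bool" where
  "C1 m n X \<longleftrightarrow> real n \<ge> real m + real (card (supp m n X)) / real m - 1"

definition C2 :: "nat \<Rightarrow> nat \<Rightarrow> (nat \<times> nat \<Rightarrow> real) \<Rightarrow> bool" where
  "C2 m n X \<longleftrightarrow> (\<forall>i\<in>{1..m}. real (card ({1..n} - row_supp n X i)) \<ge> real m - 1)"

definition C3 :: "nat \<Rightarrow> nat \<Rightarrow> (nat \<times> nat \<Rightarrow> real) \<Rightarrow> bool" where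
  "C3 m n X \<longleftrightarrow> (\<forall>i\<in>{1..m}. \<forall>i'\<in>{1..m}. i' \<noteq> i \<longrightarrow>
                     (\<exists>j\<in>{1..n}. X (i, j) = 0 \<and> X (i', j) \<noteq> 0))"

end

theory Submission
  imports Defs "HOL-Real_Asymp.Real_Asymp"
begin

lemma sets_BG [measurable_cong]: "sets (BG \<theta>) = sets borel"
  by (simp add: BG_def)

lemma space_BG: "space (BG \<theta>) = UNIV"
  by (simp add: BG_def)

lemma std_ps: "prob_space (density lborel std_normal_density)"
  by (rule prob_space_normal_density) simp

lemma BG_meas: "(\<lambda>(w, c). (if w then 1 else 0) * c :: real) \<in> borel_measurable (measure_pmf (bernoulli_pmf \<theta>) \<Otimes>\<^sub>M density lborel std_normal_density)"
proof -
  have "(\<lambda>x::bool\<times>real. (if fst x then 1 else 0) * snd x) \<in> borel_measurable (measure_pmf (bernoulli_pmf \<theta>) \<Otimes>\<^sub>M density lborel std_normal_density)"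
    by measurable
  then show ?thesis by (simp add: case_prod_beta')
qed

lemma prob_space_BG: "prob_space (BG \<theta>)"
  unfolding BG_def
  by (intro prob_space.prob_space_distr prob_space_pair prob_space_measure_pmf std_ps BG_meas)

lemma emeasure_BG_nz:
  assumes "0 \<le> \<theta>" "\<theta> \<le> 1"
  shows "emeasure (BG \<theta>) (UNIV - {0}) = ennreal \<theta>"
proof -
  interpret G: prob_space "density lborel std_normal_density" by (rule std_ps)
  have pre: "(\<lambda>(w, c). (if w then 1 else 0) * c) -` (UNIV - {0::real}) \<inter> space (measure_pmf (bernoulli_pmf \<theta>) \<Otimes>\<^sub>M density lborel std_normal_density)
     = {True} \<times> (UNIV - {0})"
    by (auto simp: space_pair_measure split: if_splits)
  have z: "emeasure (density lborel std_normal_density) {0} = 0"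
    by (subst emeasure_density) (auto intro!: nn_integral_null_set)
  have "emeasure (density lborel std_normal_density) (UNIV - {0}) = 1"
    using G.emeasure_space_1 z by (subst emeasure_Diff) auto
  then show ?thesis
    unfolding BG_def
    apply (subst emeasure_distr)
      apply (rule BG_meas)
    apply simp
    apply (simp only: pre)
    apply (subst G.emeasure_pair_measure_Times)
    using assms by (auto simp: emeasure_pmf_single)
qed

lemma hoeff01:
  assumes ps: "prob_space M" and fin: "finite J" and ne: "J \<noteq> {}"
    and ind: "prob_space.indep_vars M (\<lambda>_. borel) Y J"
    and rng: "\<And>j x. j \<in> J \<Longrightarrow> x \<in> space M \<Longrightarrow> Y j x \<in> {0..1}"
    and eps: "0 \<le> \<epsilon>"
  shows "measure M {x\<in>space M. (\<Sum>j\<in>J. Y j x) \<ge> (\<Sum>j\<in>J. prob_space.expectation M (Y j)) + \<epsilon>} \<le> exp (-2 * \<epsilon>\<^sup>2 / card J)"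
    and "measure M {x\<in>space M. (\<Sum>j\<in>J. Y j x) \<le> (\<Sum>j\<in>J. prob_space.expectation M (Y j)) - \<epsilon>} \<le> exp (-2 * \<epsilon>\<^sup>2 / card J)"
proof -
  interpret prob_space M by (rule ps)
  interpret H: Hoeffding_ineq M J Y "\<lambda>_. 0" "\<lambda>_. 1" "\<Sum>j\<in>J. expectation (Y j)"
  proof unfold_locales
    show "finite J" by (rule fin)
    show "indep_vars (\<lambda>_. borel) Y J" by (rule ind)
    show "AE x in M. Y i x \<in> {0..1}" if "i \<in> J" for i
      using rng[OF that] by (intro AE_I2) auto
  qed simp
  have pos: "(\<Sum>i\<in>J. ((\<lambda>_. 1::real) i - (\<lambda>_. 0) i)\<^sup>2) > 0" using fin ne by (simp add: card_gt_0_iff)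
  show "measure M {x\<in>space M. (\<Sum>j\<in>J. Y j x) \<ge> (\<Sum>j\<in>J. expectation (Y j)) + \<epsilon>} \<le> exp (-2 * \<epsilon>\<^sup>2 / card J)"
    using H.Hoeffding_ineq_ge[OF eps pos] by simp
  show "measure M {x\<in>space M. (\<Sum>j\<in>J. Y j x) \<le> (\<Sum>j\<in>J. expectation (Y j)) - \<epsilon>} \<le> exp (-2 * \<epsilon>\<^sup>2 / card J)"
    using H.Hoeffding_ineq_le[OF eps pos] by simp
qed

lemma indep_coord:
  assumes N: "prob_space N" and ne: "I \<noteq> {}"
  shows "prob_space.indep_vars (PiM I (\<lambda>_. N)) (\<lambda>_. N) (\<lambda>i x. x i) I"
proof -
  interpret product_prob_space "\<lambda>_. N" I
    by (simp add: N product_prob_space_def product_prob_space_axioms_def product_sigma_finite_def prob_space_imp_sigma_finite)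
  have d1: "distr (PiM I (\<lambda>_. N)) (PiM I (\<lambda>_. N)) (\<lambda>x. \<lambda>i\<in>I. x i) = PiM I (\<lambda>_. N)"
  proof -
    have "distr (PiM I (\<lambda>_. N)) (PiM I (\<lambda>_. N)) (\<lambda>x. \<lambda>i\<in>I. x i) = distr (PiM I (\<lambda>_. N)) (PiM I (\<lambda>_. N)) (\<lambda>x. x)"
      by (rule distr_cong) (auto simp: space_PiM PiE_def extensional_restrict)
    then show ?thesis by simp
  qed
  have d2: "(\<Pi>\<^sub>M i\<in>I. distr (PiM I (\<lambda>_. N)) N (\<lambda>x. x i)) = PiM I (\<lambda>_. N)"
    by (rule PiM_cong) (auto intro!: distr_PiM_component N)
  show ?thesis
    by (subst P.indep_vars_iff_distr_eq_PiM'[OF ne]) (auto simp: d1 d2)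
qed

lemma pattern_sets:
  fixes M :: "'i \<Rightarrow> real measure" and P :: "('i \<Rightarrow> real) \<Rightarrow> bool"
  assumes fin: "finite I" and sM: "\<And>i. i \<in> I \<Longrightarrow> sets (M i) = sets borel"
    and inv: "\<And>X Y. X \<in> space (PiM I M) \<Longrightarrow> Y \<in> space (PiM I M) \<Longrightarrow> (\<forall>i\<in>I. (X i \<noteq> 0) = (Y i \<noteq> 0)) \<Longrightarrow> P X \<Longrightarrow> P Y"
  shows "{X \<in> space (PiM I M). P X} \<in> sets (PiM I M)"
proof -
  define pat where "pat X = restrict (\<lambda>i. X i \<noteq> 0) I" for X :: "'i \<Rightarrow> real"
  define F where "F = pat ` {X \<in> space (PiM I M). P X}"
  have "F \<subseteq> PiE I (\<lambda>_. UNIV)" by (auto simp: F_def pat_def)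
  then have finF: "finite F" by (rule finite_subset) (simp add: fin finite_PiE)
  have eq: "{X \<in> space (PiM I M). P X} = (\<Union>f\<in>F. \<Inter>i\<in>I. {X \<in> space (PiM I M). (X i \<noteq> 0) = f i}) \<inter> space (PiM I M)"
  proof (intro equalityI subsetI)
    fix X assume "X \<in> {X \<in> space (PiM I M). P X}"
    then show "X \<in> (\<Union>f\<in>F. \<Inter>i\<in>I. {X \<in> space (PiM I M). (X i \<noteq> 0) = f i}) \<inter> space (PiM I M)"
      by (auto simp: F_def pat_def intro!: bexI[of _ "pat X"])
  next
    fix X assume X: "X \<in> (\<Union>f\<in>F. \<Inter>i\<in>I. {X \<in> space (PiM I M). (X i \<noteq> 0) = f i}) \<inter> space (PiM I M)"
    then obtain Y where Y: "Y \<in> space (PiM I M)" "P Y" and XY: "\<forall>i\<in>I. (X i \<noteq> 0) = pat Y i"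
      by (auto simp: F_def)
    have "\<forall>i\<in>I. (Y i \<noteq> 0) = (X i \<noteq> 0)" using XY by (auto simp: pat_def)
    with inv[OF Y(1) _ _ Y(2)] X show "X \<in> {X \<in> space (PiM I M). P X}" by auto
  qed
  have meas: "{X \<in> space (PiM I M). (X i \<noteq> 0) = b} \<in> sets (PiM I M)" if "i \<in> I" for i b
  proof -
    have "(\<lambda>X. X i) \<in> measurable (PiM I M) (M i)" using that by (rule measurable_component_singleton)
    then have "(\<lambda>X. X i) \<in> borel_measurable (PiM I M)" by (simp add: measurable_cong_sets[OF refl sM[OF that]])
    then show ?thesis by measurable
  qed
  show ?thesis
    unfolding eq
    apply (cases "I = {}")
     apply (simp add: finF)
    by (intro sets.Int sets.finite_UN finF sets.finite_INT fin meas) auto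
qed

definition nz :: "real \<Rightarrow> real" where "nz x = (if x \<noteq> 0 then 1 else 0)"

lemma nz_meas[measurable]: "nz \<in> borel_measurable borel"
  unfolding nz_def by measurable

lemma indep_groups:
  assumes N: "prob_space N" and ne: "I \<noteq> {}"
    and K: "\<And>j. j \<in> J \<Longrightarrow> K j \<subseteq> I" and dj: "disjoint_family_on K J"
    and f: "\<And>j. j \<in> J \<Longrightarrow> f j \<in> borel_measurable (PiM (K j) (\<lambda>_. N))"
  shows "prob_space.indep_vars (PiM I (\<lambda>_. N)) (\<lambda>_. borel) (\<lambda>j X. f j (restrict X (K j))) J"
proof -
  interpret P: prob_space "PiM I (\<lambda>_. N)" by (intro prob_space_PiM N)
  have "P.indep_vars (\<lambda>j. PiM (K j) (\<lambda>_. N)) (\<lambda>j \<omega>. restrict (\<lambda>i. \<omega> i) (K j)) J"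
    by (rule P.indep_vars_restrict[OF indep_coord[OF N ne] K dj])
  then have "P.indep_vars (\<lambda>_. borel) (\<lambda>j \<omega>. f j (restrict (\<lambda>i. \<omega> i) (K j))) J"
    by (rule P.indep_vars_compose2) (rule f)
  then show ?thesis by simp
qed

lemma BG_zero:
  assumes "0 \<le> \<theta>" "\<theta> \<le> 1"
  shows "emeasure (BG \<theta>) {0} = ennreal (1 - \<theta>)"
proof -
  interpret prob_space "BG \<theta>" by (rule prob_space_BG)
  have "emeasure (BG \<theta>) {0} = emeasure (BG \<theta>) (space (BG \<theta>)) - emeasure (BG \<theta>) (UNIV - {0})"
    by (subst emeasure_compl[symmetric]) (auto simp: space_BG sets_BG intro!: arg_cong[where f="emeasure (BG \<theta>)"])
  also have "\<dots> = ennreal (1 - \<theta>)" using assms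
    by (simp add: emeasure_space_1 emeasure_BG_nz) (metis ennreal_1 ennreal_minus)
  finally show ?thesis .
qed

lemma exp_nz:
  assumes "0 \<le> \<theta>" "\<theta> \<le> 1" "k \<in> I"
  shows "integral\<^sup>L (PiM I (\<lambda>_. BG \<theta>)) (\<lambda>X. nz (X k)) = \<theta>"
proof -
  have "integral\<^sup>L (PiM I (\<lambda>_. BG \<theta>)) (\<lambda>X. nz (X k)) = integral\<^sup>L (distr (PiM I (\<lambda>_. BG \<theta>)) (BG \<theta>) (\<lambda>X. X k)) nz"
    by (subst integral_distr) (auto simp: assms sets_BG)
  also have "\<dots> = integral\<^sup>L (BG \<theta>) nz"
    by (subst distr_PiM_component) (auto simp: assms prob_space_BG)
  also have "\<dots> = integral\<^sup>L (BG \<theta>) (indicator (UNIV - {0}))"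
    by (rule Bochner_Integration.integral_cong) (auto simp: nz_def)
  also have "\<dots> = \<theta>"
    using emeasure_BG_nz[OF assms(1,2)] assms by (simp add: measure_def space_BG)
  finally show ?thesis .
qed

lemma exp_pair:
  assumes "0 \<le> \<theta>" "\<theta> \<le> 1" "k \<in> I" "k' \<in> I" "k \<noteq> k'"
  shows "integral\<^sup>L (PiM I (\<lambda>_. BG \<theta>)) (\<lambda>X. (1 - nz (X k)) * nz (X k')) = (1 - \<theta>) * \<theta>"
proof -
  define A where "A i = (if i = k then {0} else UNIV - {0::real})" for i
  define S where "S = prod_emb I (\<lambda>_. BG \<theta>) {k, k'} (PiE {k, k'} A)"
  have "integral\<^sup>L (PiM I (\<lambda>_. BG \<theta>)) (\<lambda>X. (1 - nz (X k)) * nz (X k')) = integral\<^sup>L (PiM I (\<lambda>_. BG \<theta>)) (indicator S)"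
    using assms
    by (intro Bochner_Integration.integral_cong)
       (auto simp: nz_def S_def A_def prod_emb_iff space_PiM PiE_iff space_BG indicator_def)
  also have "\<dots> = measure (PiM I (\<lambda>_. BG \<theta>)) S"
    by (simp add: S_def prod_emb_def space_PiM Int_absorb2)
  also have "emeasure (PiM I (\<lambda>_. BG \<theta>)) S = (\<Prod>i\<in>{k,k'}. emeasure (BG \<theta>) (A i))"
    unfolding S_def using assms
    by (intro emeasure_PiM_emb) (auto simp: prob_space_BG A_def sets_BG)
  then have "measure (PiM I (\<lambda>_. BG \<theta>)) S = (1 - \<theta>) * \<theta>"
    using assms by (simp add: measure_def A_def BG_zero emeasure_BG_nz ennreal_mult[symmetric])
  finally show ?thesis .
qed

lemma card_row: "real (card (row_supp n X i)) = (\<Sum>j\<in>{1..n}. nz (X (i, j)))"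
proof -
  have "real (card (row_supp n X i)) = (\<Sum>j\<in>row_supp n X i. 1)" by simp
  also have "\<dots> = (\<Sum>j\<in>{1..n}. nz (X (i, j)))"
    unfolding row_supp_def by (subst sum.inter_filter) (auto simp: nz_def intro!: sum.cong)
  finally show ?thesis .
qed

lemma card_row_compl: "real (card ({1..n} - row_supp n X i)) = real n - real (card (row_supp n X i))"
proof -
  have "row_supp n X i \<subseteq> {1..n}" by (auto simp: row_supp_def)
  then have "card ({1..n} - row_supp n X i) = n - card (row_supp n X i)"
    by (subst card_Diff_subset) (auto intro: finite_subset)
  moreover have "card (row_supp n X i) \<le> n"
    using \<open>row_supp n X i \<subseteq> {1..n}\<close> by (metis card_atLeastAtMost card_mono diff_Suc_1 finite_atLeastAtMost)
  ultimately show ?thesis by simp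
qed

lemma C2_C1:
  assumes "0 < m" "C2 m n X"
  shows "C1 m n X"
proof -
  have eq: "supp m n X = Sigma {1..m} (row_supp n X)"
    by (auto simp: supp_def row_supp_def)
  have fin: "finite (row_supp n X i)" for i
    by (rule finite_subset[of _ "{1..n}"]) (auto simp: row_supp_def)
  have "real (card (supp m n X)) = (\<Sum>i\<in>{1..m}. real (card (row_supp n X i)))"
    unfolding eq by (subst card_SigmaI) (auto simp: fin)
  also have "\<dots> \<le> (\<Sum>i\<in>{1..m}. real n - real m + 1)"
  proof (rule sum_mono)
    fix i show "i \<in> {1..m} \<Longrightarrow> real (card (row_supp n X i)) \<le> real n - real m + 1"
    proof -
      assume i: "i \<in> {1..m}"
      have "real m - 1 \<le> real (card ({1..n} - row_supp n X i))"
        using assms(2) i by (simp add: C2_def)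
      then show ?thesis using card_row_compl[of n X i] by linarith
    qed
  qed
  also have "\<dots> = real m * (real n - real m + 1)" by simp
  finally have "real (card (supp m n X)) / real m \<le> real n - real m + 1"
    using assms(1) by (simp add: field_simps)
  then show ?thesis by (simp add: C1_def)
qed

lemma borel_coord:
  assumes "k \<in> K"
  shows "(\<lambda>\<omega>. \<omega> k) \<in> borel_measurable (PiM K (\<lambda>_. BG \<theta>))"
proof -
  have "(\<lambda>\<omega>. \<omega> k) \<in> measurable (PiM K (\<lambda>_. BG \<theta>)) (BG \<theta>)"
    using assms by (rule measurable_component_singleton)
  then show ?thesis by (simp add: measurable_cong_sets[OF refl sets_BG])
qed

lemma pattern_C:
  assumes "\<forall>k\<in>{1..m}\<times>{1..n}. (X k \<noteq> 0) = (Y k \<noteq> 0)"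
  shows "(C1 m n X \<and> C2 m n X \<and> C3 m n X) = (C1 m n Y \<and> C2 m n Y \<and> C3 m n Y)"
proof -
  have s: "supp m n X = supp m n Y" using assms by (auto simp: supp_def)
  have r: "row_supp n X i = row_supp n Y i" if "i \<in> {1..m}" for i
    using assms that by (auto simp: row_supp_def)
  have c1: "C1 m n X = C1 m n Y" by (simp add: C1_def s)
  have c2: "C2 m n X = C2 m n Y" unfolding C2_def using r by auto
  have c3: "C3 m n X = C3 m n Y" unfolding C3_def using assms by (auto 0 3)
  show ?thesis using c1 c2 c3 by simp
qed

lemma nz_cong: "(x \<noteq> 0) = (y \<noteq> 0) \<Longrightarrow> nz x = nz y" by (simp add: nz_def)

lemma fail_bound:
  fixes m n :: nat and \<theta> \<epsilon> :: real
  assumes \<theta>: "0 < \<theta>" "\<theta> < 1" and mn: "0 < m" "0 < n"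
    and eps: "0 \<le> \<epsilon>" "real n * \<theta> + \<epsilon> \<le> real n - real m + 1"
  defines "P \<equiv> iid_matrix m n (BG \<theta>)"
  shows "{X\<in>space P. C1 m n X \<and> C2 m n X \<and> C3 m n X} \<in> sets P"
    and "1 - measure P {X\<in>space P. C1 m n X \<and> C2 m n X \<and> C3 m n X}
           \<le> real m * exp (-2 * \<epsilon>\<^sup>2 / real n) + real (m * m) * exp (-2 * (real n * ((1 - \<theta>) * \<theta>))\<^sup>2 / real n)"
proof -
  define I where "I = {1..m} \<times> {1..n}"
  define q where "q = (1 - \<theta>) * \<theta>"
  have PI: "P = PiM I (\<lambda>_. BG \<theta>)" by (simp add: P_def iid_matrix_def I_def)
  interpret prob_space P unfolding PI by (intro prob_space_PiM prob_space_BG)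
  have finI: "finite I" by (simp add: I_def)
  have neI: "I \<noteq> {}" using mn by (auto simp: I_def)
  have spP: "space P = space (PiM I (\<lambda>_. BG \<theta>))" by (simp add: PI)
  define Ev where "Ev = {X\<in>space P. C1 m n X \<and> C2 m n X \<and> C3 m n X}"
  show evs: "Ev \<in> sets P"
    unfolding Ev_def PI
  proof (rule pattern_sets[OF finI])
    fix X Y :: "nat \<times> nat \<Rightarrow> real" assume "\<forall>i\<in>I. (X i \<noteq> 0) = (Y i \<noteq> 0)" "C1 m n X \<and> C2 m n X \<and> C3 m n X"
    then show "C1 m n Y \<and> C2 m n Y \<and> C3 m n Y" using pattern_C[of m n X Y] by (simp add: I_def)
  qed (simp add: sets_BG)
  show "1 - measure P Ev \<le> real m * exp (-2 * \<epsilon>\<^sup>2 / real n) + real (m * m) * exp (-2 * (real n * q)\<^sup>2 / real n)"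
  proof -
    define B2 where "B2 i = {X\<in>space P. (\<Sum>j\<in>{1..n}. nz (X (i, j))) \<ge> real n * \<theta> + \<epsilon>}" for i
    define Yf where "Yf i i' j X = (1 - nz (X (i, j))) * nz (X (i', j))" for i i' j and X :: "nat \<times> nat \<Rightarrow> real"
    define B3 where "B3 p = {X\<in>space P. (\<Sum>j\<in>{1..n}. Yf (fst p) (snd p) j X) \<le> 0}" for p
    define Pr where "Pr = {p \<in> {1..m} \<times> {1..m}. fst p \<noteq> snd p}"
    have finPr: "finite Pr" by (simp add: Pr_def)
    have cardPr: "card Pr \<le> m * m"
    proof -
      have "card Pr \<le> card ({1..m} \<times> {1..m})" unfolding Pr_def by (rule card_mono) auto
      then show ?thesis by simp
    qed
    have E2: "(\<Sum>j\<in>{1..n}. expectation (\<lambda>X. nz (X (i, j)))) = real n * \<theta>" if "i \<in> {1..m}" for i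
    proof -
      have "(\<Sum>j\<in>{1..n}. expectation (\<lambda>X. nz (X (i, j)))) = (\<Sum>j\<in>{1..n}. \<theta>)"
        using that \<theta> by (intro sum.cong refl) (simp add: PI exp_nz I_def)
      then show ?thesis by simp
    qed
    have E3: "(\<Sum>j\<in>{1..n}. expectation (Yf (fst p) (snd p) j)) = real n * q" if "p \<in> Pr" for p
    proof -
      have "(\<Sum>j\<in>{1..n}. expectation (Yf (fst p) (snd p) j)) = (\<Sum>j\<in>{1..n}. q)"
        using that \<theta> unfolding Yf_def q_def
        by (intro sum.cong refl) (subst PI, rule exp_pair, auto simp: I_def Pr_def)
      then show ?thesis by simp
    qed
    have sB2: "B2 i \<in> sets P" if "i \<in> {1..m}" for i
      unfolding B2_def PI
    proof (rule pattern_sets[OF finI])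
      fix X Y :: "nat \<times> nat \<Rightarrow> real" assume "\<forall>i\<in>I. (X i \<noteq> 0) = (Y i \<noteq> 0)"
      then have "(\<Sum>j\<in>{1..n}. nz (X (i, j))) = (\<Sum>j\<in>{1..n}. nz (Y (i, j)))"
        using that by (intro sum.cong refl nz_cong) (auto simp: I_def)
      then show "(\<Sum>j\<in>{1..n}. nz (X (i, j))) \<ge> real n * \<theta> + \<epsilon> \<Longrightarrow>
                 (\<Sum>j\<in>{1..n}. nz (Y (i, j))) \<ge> real n * \<theta> + \<epsilon>" by simp
    qed (simp add: sets_BG)
    have sB3: "B3 p \<in> sets P" if "p \<in> Pr" for p
      unfolding B3_def PI
    proof (rule pattern_sets[OF finI])
      fix X Y :: "nat \<times> nat \<Rightarrow> real" assume "\<forall>i\<in>I. (X i \<noteq> 0) = (Y i \<noteq> 0)"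
      then have "(\<Sum>j\<in>{1..n}. Yf (fst p) (snd p) j X) = (\<Sum>j\<in>{1..n}. Yf (fst p) (snd p) j Y)"
        using that unfolding Yf_def
        by (intro sum.cong refl arg_cong2[where f="(*)"] arg_cong2[where f="(-)"] nz_cong) (auto simp: I_def Pr_def)
      then show "(\<Sum>j\<in>{1..n}. Yf (fst p) (snd p) j X) \<le> 0 \<Longrightarrow>
                 (\<Sum>j\<in>{1..n}. Yf (fst p) (snd p) j Y) \<le> 0" by simp
    qed (simp add: sets_BG)
    have b2: "measure P (B2 i) \<le> exp (-2 * \<epsilon>\<^sup>2 / real n)" if i: "i \<in> {1..m}" for i
    proof -
      have ind0: "indep_vars (\<lambda>_. borel) (\<lambda>j X. (\<lambda>\<omega>. nz (\<omega> (i, j))) (restrict X {(i, j)})) {1..n}"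
        unfolding PI
        by (rule indep_groups[OF prob_space_BG neI])
           (use i in \<open>auto simp: I_def disjoint_family_on_def intro!: measurable_compose[OF borel_coord nz_meas]\<close>)
      have ind: "indep_vars (\<lambda>_. borel) (\<lambda>j X. nz (X (i, j))) {1..n}"
        using ind0 by simp
      have "measure P {X\<in>space P. (\<Sum>j\<in>{1..n}. nz (X (i, j))) \<ge> (\<Sum>j\<in>{1..n}. expectation (\<lambda>X. nz (X (i, j)))) + \<epsilon>} \<le> exp (-2 * \<epsilon>\<^sup>2 / card {1..n})"
        by (rule hoeff01(1)[OF prob_space_axioms _ _ ind _ eps(1)]) (use mn in \<open>auto simp: nz_def\<close>)
      then show ?thesis unfolding E2[OF i] by (simp add: B2_def)
    qed
    have b3: "measure P (B3 p) \<le> exp (-2 * (real n * q)\<^sup>2 / real n)" if p: "p \<in> Pr" for p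
    proof -
      obtain i i' where ii: "p = (i, i')" "i \<in> {1..m}" "i' \<in> {1..m}" "i \<noteq> i'" using p by (auto simp: Pr_def)
      have ind0: "indep_vars (\<lambda>_. borel) (\<lambda>j X. (\<lambda>\<omega>. (1 - nz (\<omega> (i, j))) * nz (\<omega> (i', j))) (restrict X {(i, j), (i', j)})) {1..n}"
        unfolding PI
        by (rule indep_groups[OF prob_space_BG neI])
           (use ii in \<open>auto simp: I_def disjoint_family_on_def intro!: borel_measurable_times borel_measurable_diff measurable_compose[OF borel_coord nz_meas]\<close>)
      have ind: "indep_vars (\<lambda>_. borel) (Yf i i') {1..n}"
        using ind0 by (simp add: Yf_def[abs_def])
      have q0: "0 \<le> real n * q" using \<theta> by (simp add: q_def)
      have "measure P {X\<in>space P. (\<Sum>j\<in>{1..n}. Yf i i' j X) \<le> (\<Sum>j\<in>{1..n}. expectation (Yf i i' j)) - real n * q} \<le> exp (-2 * (real n * q)\<^sup>2 / card {1..n})"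
        by (rule hoeff01(2)[OF prob_space_axioms _ _ ind _ q0]) (use mn in \<open>auto simp: nz_def Yf_def\<close>)
      then show ?thesis using E3[OF p] unfolding ii by (simp add: B3_def)
    qed
    have sub: "space P - Ev \<subseteq> (\<Union>i\<in>{1..m}. B2 i) \<union> (\<Union>p\<in>Pr. B3 p)"
    proof
      fix X assume X: "X \<in> space P - Ev"
      then have Xs: "X \<in> space P" and nC: "\<not> (C1 m n X \<and> C2 m n X \<and> C3 m n X)" by (auto simp: Ev_def)
      show "X \<in> (\<Union>i\<in>{1..m}. B2 i) \<union> (\<Union>p\<in>Pr. B3 p)"
      proof (cases "C2 m n X")
        case False
        then obtain i where i: "i \<in> {1..m}" and lt: "real (card ({1..n} - row_supp n X i)) < real m - 1"
          by (auto simp: C2_def not_le)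
        have "(\<Sum>j\<in>{1..n}. nz (X (i, j))) \<ge> real n * \<theta> + \<epsilon>"
          using lt card_row_compl[of n X i] card_row[of n X i] eps(2) by linarith
        then have "X \<in> B2 i" using Xs by (simp add: B2_def)
        then show ?thesis using i by blast
      next
        case True
        then have "C1 m n X" using C2_C1 mn by blast
        with True nC have "\<not> C3 m n X" by blast
        then obtain i i' where ii: "i \<in> {1..m}" "i' \<in> {1..m}" "i' \<noteq> i"
            and none: "\<forall>j\<in>{1..n}. \<not> (X (i, j) = 0 \<and> X (i', j) \<noteq> 0)"
          by (auto simp: C3_def)
        have pP: "(i, i') \<in> Pr" using ii by (auto simp: Pr_def)
        have "(\<Sum>j\<in>{1..n}. Yf i i' j X) = 0"
          using none by (intro sum.neutral) (auto simp: Yf_def nz_def)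
        then have "X \<in> B3 (i, i')" using Xs by (simp add: B3_def)
        then show ?thesis using pP by blast
      qed
    qed
    have "measure P (space P - Ev) \<le> measure P ((\<Union>i\<in>{1..m}. B2 i) \<union> (\<Union>p\<in>Pr. B3 p))"
      using sub sB2 sB3 finPr by (intro finite_measure_mono) auto
    also have "\<dots> \<le> measure P (\<Union>i\<in>{1..m}. B2 i) + measure P (\<Union>p\<in>Pr. B3 p)"
      using sB2 sB3 finPr by (intro measure_Un_le) auto
    also have "\<dots> \<le> (\<Sum>i\<in>{1..m}. measure P (B2 i)) + (\<Sum>p\<in>Pr. measure P (B3 p))"
      using sB2 sB3 finPr by (intro add_mono measure_UNION_le) auto
    also have "\<dots> \<le> real (card {1..m}) * exp (-2 * \<epsilon>\<^sup>2 / real n) + real (card Pr) * exp (-2 * (real n * q)\<^sup>2 / real n)"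
      using b2 b3 by (intro add_mono sum_bounded_above) auto
    also have "\<dots> \<le> real m * exp (-2 * \<epsilon>\<^sup>2 / real n) + real (m * m) * exp (-2 * (real n * q)\<^sup>2 / real n)"
      using cardPr by (intro add_mono mult_right_mono) (auto simp del: of_nat_mult simp: of_nat_mult[symmetric])
    finally have "measure P (space P - Ev) \<le> real m * exp (-2 * \<epsilon>\<^sup>2 / real n) + real (m * m) * exp (-2 * (real n * q)\<^sup>2 / real n)" .
    then show ?thesis using prob_compl[OF evs] by simp
  qed
qed

lemma model_reduce:
  assumes m: "0 < m" and S: "{X \<in> space (iid_matrix m n (BG \<theta>)). Q X} \<in> sets (iid_matrix m n (BG \<theta>))"
  shows "measure (model \<theta> m n) {DX \<in> space (model \<theta> m n). Q (snd DX)}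
       = measure (iid_matrix m n (BG \<theta>)) {X \<in> space (iid_matrix m n (BG \<theta>)). Q X}"
proof -
  define A where "A = iid_matrix m m (density lborel (normal_density 0 (1 / sqrt (real m))))"
  define B where "B = iid_matrix m n (BG \<theta>)"
  interpret A: prob_space A unfolding A_def iid_matrix_def
    by (intro prob_space_PiM prob_space_normal_density) (use m in simp)
  interpret B: prob_space B unfolding B_def iid_matrix_def
    by (intro prob_space_PiM prob_space_BG)
  have eq: "{DX \<in> space (model \<theta> m n). Q (snd DX)} = space A \<times> {X \<in> space B. Q X}"
    by (auto simp: model_def A_def B_def space_pair_measure)
  have "emeasure (A \<Otimes>\<^sub>M B) (space A \<times> {X \<in> space B. Q X}) = emeasure A (space A) * emeasure B {X \<in> space B. Q X}"
    using S by (intro B.emeasure_pair_measure_Times) (auto simp: B_def)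
  also have "\<dots> = emeasure B {X \<in> space B. Q X}" by (simp add: A.emeasure_space_1)
  finally show ?thesis
    unfolding eq by (simp add: measure_def model_def A_def[symmetric] B_def[symmetric])
qed

lemma lim_aux:
  assumes "0 < a" "0 < b"
  shows "((\<lambda>x::real. x * exp (-a * x) + x\<^sup>2 * exp (-b * x)) \<longlongrightarrow> 0) at_top"
proof -
  have 1: "((\<lambda>x::real. x * exp (-a * x)) \<longlongrightarrow> 0) at_top" using assms by real_asymp
  have 2: "((\<lambda>x::real. x\<^sup>2 * exp (-b * x)) \<longlongrightarrow> 0) at_top" using assms by real_asymp
  show ?thesis using tendsto_add[OF 1 2] by simp
qed

theorem corollary1:
  fixes \<theta> nbar :: real and m n :: "nat \<Rightarrow> nat"
  assumes "0 < \<theta>" "\<theta> < 1"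
    and "\<And>k. 0 < m k" "\<And>k. 0 < n k"
    and "filterlim m at_top sequentially" "filterlim n at_top sequentially"
    and "0 < nbar"
    and "(\<lambda>k. real (n k) / real (m k)) \<longlonglongrightarrow> nbar"
    and "nbar > 1 / (1 - \<theta>)"
  shows "(\<lambda>k. measure (model \<theta> (m k) (n k))
            {DX \<in> space (model \<theta> (m k) (n k)).
               C1 (m k) (n k) (snd DX) \<and> C2 (m k) (n k) (snd DX) \<and> C3 (m k) (n k) (snd DX)})
         \<longlonglongrightarrow> 1"
proof -
  note th = assms(1,2)
  define P where "P k = measure (model \<theta> (m k) (n k))
            {DX \<in> space (model \<theta> (m k) (n k)).
               C1 (m k) (n k) (snd DX) \<and> C2 (m k) (n k) (snd DX) \<and> C3 (m k) (n k) (snd DX)}" for k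
  have nb: "1 / nbar < 1 - \<theta>"
  proof -
    have "1 < nbar * (1 - \<theta>)" using assms(9) th by (simp add: field_simps)
    then show ?thesis using assms(7) by (simp add: field_simps)
  qed
  define \<delta> where "\<delta> = ((1 - \<theta>) - 1 / nbar) / 2"
  define c where "c = 1 / nbar + \<delta>"
  define q where "q = (1 - \<theta>) * \<theta>"
  have \<delta>: "0 < \<delta>" using nb by (simp add: \<delta>_def)
  have c1: "c = 1 - \<theta> - \<delta>" by (simp add: c_def \<delta>_def field_simps)
  have c_lt: "c < 1" using c1 th \<delta> by simp
  have q: "0 < q" using th by (simp add: q_def)
  have mn_lim: "(\<lambda>k. real (m k) / real (n k)) \<longlonglongrightarrow> 1 / nbar"
  proof -
    have "(\<lambda>k. inverse (real (n k) / real (m k))) \<longlonglongrightarrow> inverse nbar"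
      using assms(7) by (intro tendsto_inverse assms(8)) simp
    then show ?thesis by (simp add: inverse_eq_divide)
  qed
  have ev_c: "eventually (\<lambda>k. real (m k) / real (n k) < c) sequentially"
    using mn_lim \<delta> by (intro order_tendstoD(2)) (auto simp: c_def)
  define g where "g x = x * exp (-(2 * \<delta>\<^sup>2) * x) + x\<^sup>2 * exp (-(2 * q\<^sup>2) * x)" for x :: real
  have nlim: "filterlim (\<lambda>k. real (n k)) at_top sequentially"
    by (rule filterlim_compose[OF filterlim_real_sequentially assms(6)])
  have glim: "(\<lambda>k. g (real (n k))) \<longlonglongrightarrow> 0"
    unfolding g_def using lim_aux[of "2 * \<delta>\<^sup>2" "2 * q\<^sup>2"] \<delta> q
    by (intro filterlim_compose[OF _ nlim]) auto
  have bound: "1 - P k \<le> g (real (n k)) \<and> 0 \<le> 1 - P k" if k: "real (m k) / real (n k) < c" for k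
  proof -
    let ?m = "m k" and ?n = "n k"
    have mpos: "0 < ?m" "0 < ?n" using assms(3,4) by auto
    have mle: "real ?m \<le> c * real ?n" using k mpos by (simp add: field_simps)
    have mle2: "real ?m \<le> real ?n" using mle c_lt mpos
      by (smt (verit, ccfv_SIG) mult_less_cancel_right2 of_nat_0_less_iff)
    have eps: "real ?n * \<theta> + \<delta> * real ?n \<le> real ?n - real ?m + 1"
      using mle unfolding c1 by (simp add: algebra_simps)
    have e0: "0 \<le> \<delta> * real ?n" using \<delta> by simp
    note fb = fail_bound[OF th mpos e0 eps]
    have PP: "P k = measure (iid_matrix ?m ?n (BG \<theta>)) {X \<in> space (iid_matrix ?m ?n (BG \<theta>)). C1 ?m ?n X \<and> C2 ?m ?n X \<and> C3 ?m ?n X}"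
      unfolding P_def
      by (rule model_reduce[where Q="\<lambda>X. C1 (m k) (n k) X \<and> C2 (m k) (n k) X \<and> C3 (m k) (n k) X", OF mpos(1) fb(1)])
    interpret B: prob_space "iid_matrix ?m ?n (BG \<theta>)" unfolding iid_matrix_def
      by (intro prob_space_PiM prob_space_BG)
    have "1 - P k \<le> real ?m * exp (-2 * (\<delta> * real ?n)\<^sup>2 / real ?n) + real (?m * ?m) * exp (-2 * (real ?n * ((1 - \<theta>) * \<theta>))\<^sup>2 / real ?n)"
      using fb(2) PP by simp
    also have "\<dots> = real ?m * exp (-(2 * \<delta>\<^sup>2) * real ?n) + real ?m * real ?m * exp (-(2 * q\<^sup>2) * real ?n)"
      using mpos by (simp add: q_def power2_eq_square field_simps)
    also have "\<dots> \<le> real ?n * exp (-(2 * \<delta>\<^sup>2) * real ?n) + real ?n * real ?n * exp (-(2 * q\<^sup>2) * real ?n)"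
      using mle2 by (intro add_mono mult_right_mono mult_mono) auto
    also have "\<dots> = g (real ?n)" by (simp add: g_def power2_eq_square)
    finally show ?thesis using PP B.measure_le_1 by simp
  qed
  have "(\<lambda>k. 1 - P k) \<longlonglongrightarrow> 0"
  proof (rule tendsto_sandwich[OF _ _ tendsto_const glim])
    show "eventually (\<lambda>k. 0 \<le> 1 - P k) sequentially" using ev_c by eventually_elim (use bound in blast)
    show "eventually (\<lambda>k. 1 - P k \<le> g (real (n k))) sequentially" using ev_c by eventually_elim (use bound in blast)
  qed
  then have "(\<lambda>k. 1 - (1 - P k)) \<longlonglongrightarrow> 1 - 0" by (intro tendsto_diff tendsto_const)
  then show ?thesis by (simp add: P_def)
qed

end
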